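(* Let $X\subset\mathbb{R}^m$ be a compact algebraic set and $f=(f_1,\dots,f_m):\mathbb{R}^n\to\mathbb{R}^m$ a polynomial map. Let $K\subset\mathbb{R}^n$ be a compact set with non-empty interior in $\mathbb{R}^n$ such that $f(K)\subset X$. Then $f(K)$ is a singleton contained in $X$. *)

theory Defs
  imports "HOL-Analysis.Analysis"
begin

inductive real_poly_fun :: "(real^'n \<Rightarrow> real) \<Rightarrow> bool" where
  const: "real_poly_fun (\<lambda>x. c)"
| coord: "real_poly_fun (\<lambda>x. x $ i)"
| add: "real_poly_fun p \<Longrightarrow> real_poly_fun q \<Longrightarrow> real_poly_fun (\<lambda>x. p x + q x)"
| mult: "real_poly_fun p \<Longrightarrow> real_poly_fun q \<Longrightarrow> real_poly_fun (\<lambda>x. p x * q x)"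

definition polynomial_map :: "(real^'n \<Rightarrow> real^'m) \<Rightarrow> bool" where
  "polynomial_map f \<longleftrightarrow> (\<forall>i. real_poly_fun (\<lambda>x. f x $ i))"

definition algebraic_set :: "(real^'m) set \<Rightarrow> bool" where
  "algebraic_set X \<longleftrightarrow> (\<exists>P. finite P \<and> (\<forall>p\<in>P. real_poly_fun p) \<and>
      X = {y. \<forall>p\<in>P. p y = 0})"

end

theory Submission
  imports Defs "HOL-Computational_Algebra.Fundamental_Theorem_Algebra"
begin

lemma rpf_line:
  assumes "real_poly_fun p"
  shows "\<exists>q. \<forall>t. p (a + t *\<^sub>R v) = poly q t"
  using assms
proof (induction rule: real_poly_fun.induct)
  case (const c)
  then show ?case by (rule exI[of _ "[:c:]"]) simp
next
  case (coord i)
  then show ?case by (rule exI[of _ "[:a $ i, v $ i:]"]) (simp add: algebra_simps)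
next
  case (add p q)
  then obtain q1 q2 where "\<forall>t. p (a + t *\<^sub>R v) = poly q1 t" "\<forall>t. q (a + t *\<^sub>R v) = poly q2 t" by blast
  then show ?case by (intro exI[of _ "q1 + q2"]) simp
next
  case (mult p q)
  then obtain q1 q2 where "\<forall>t. p (a + t *\<^sub>R v) = poly q1 t" "\<forall>t. q (a + t *\<^sub>R v) = poly q2 t" by blast
  then show ?case by (intro exI[of _ "q1 * q2"]) simp
qed

lemma rpf_comp:
  assumes "real_poly_fun p" and "polynomial_map f"
  shows "real_poly_fun (\<lambda>x. p (f x))"
  using assms(1)
proof (induction rule: real_poly_fun.induct)
  case (const c)
  then show ?case by (rule real_poly_fun.const)
next
  case (coord i)
  then show ?case using assms(2) by (simp add: polynomial_map_def)
next
  case (add p q)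
  show ?case using add.IH by (rule real_poly_fun.add)
next
  case (mult p q)
  show ?case using mult.IH by (rule real_poly_fun.mult)
qed

lemma poly_zero_near0:
  fixes q :: "real poly"
  assumes "e > 0" and "\<And>t. \<bar>t\<bar> < e \<Longrightarrow> poly q t = 0"
  shows "q = 0"
proof (rule ccontr)
  assume "q \<noteq> 0"
  then have "finite {x. poly q x = 0}" by (rule poly_roots_finite)
  moreover have "{-e<..<e} \<subseteq> {x. poly q x = 0}" using assms(2) by auto
  moreover have "infinite {-e<..<e}" using assms(1) by simp
  ultimately show False using finite_subset by blast
qed

lemma poly_bounded_const:
  fixes q :: "real poly"
  assumes "\<And>t. \<bar>poly q t\<bar> \<le> B"
  shows "poly q s = poly q 0"
proof (cases q)
  case (pCons c p)
  show ?thesis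
  proof (cases "p = 0")
    case True then show ?thesis using pCons by simp
  next
    case False
    from poly_infinity[OF False, of "B+1" c] obtain r where
      r: "\<forall>z. r \<le> norm z \<longrightarrow> B + 1 \<le> norm (poly (pCons c p) z)" by blast
    have "B + 1 \<le> \<bar>poly q \<bar>r\<bar>\<bar>" using r pCons by auto
    with assms[of "\<bar>r\<bar>"] show ?thesis by simp
  qed
qed

theorem lemma2p1:
  fixes X :: "(real^'m) set" and f :: "real^'n \<Rightarrow> real^'m" and K :: "(real^'n) set"
  assumes "compact X" and "algebraic_set X"
    and "polynomial_map f"
    and "compact K" and "interior K \<noteq> {}"
    and "f ` K \<subseteq> X"
  shows "\<exists>y. f ` K = {y} \<and> y \<in> X"
proof -
  obtain a where aK: "a \<in> interior K" using assms(5) by blast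
  then obtain r where r: "r > 0" "ball a r \<subseteq> K"
    using mem_interior by blast
  obtain P where P: "finite P" "\<forall>p\<in>P. real_poly_fun p" "X = {y. \<forall>p\<in>P. p y = 0}"
    using assms(2) unfolding algebraic_set_def by blast
  obtain B where B: "\<forall>y\<in>X. norm y \<le> B"
    using compact_imp_bounded[OF assms(1)] unfolding bounded_iff by blast
  have const: "f x = f a" for x
  proof -
    define v where "v = x - a"
    define e where "e = r / (norm v + 1)"
    have e: "e > 0" using r unfolding e_def by (simp add: add_nonneg_pos)
    have inK: "a + t *\<^sub>R v \<in> K" if "\<bar>t\<bar> < e" for t
    proof -
      have "norm (t *\<^sub>R v) = \<bar>t\<bar> * norm v" by simp
      also have "\<dots> \<le> e * norm v" using that by (simp add: mult_right_mono)
      also have "\<dots> < r"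
      proof -
        have "r * norm v < r * (norm v + 1)" using r by simp
        then show ?thesis unfolding e_def
          by (simp add: pos_divide_less_eq add_nonneg_pos)
      qed
      finally have "dist a (a + t *\<^sub>R v) < r" by (simp add: dist_norm)
      then show ?thesis using r(2) by auto
    qed
    have inX: "f (a + t *\<^sub>R v) \<in> X" for t
    proof -
      have "p (f (a + t *\<^sub>R v)) = 0" if pP: "p \<in> P" for p
      proof -
        have "real_poly_fun (\<lambda>x. p (f x))" using rpf_comp P(2) pP assms(3) by blast
        then obtain q where q: "\<forall>t. p (f (a + t *\<^sub>R v)) = poly q t"
          using rpf_line by blast
        have "q = 0"
        proof (rule poly_zero_near0[OF e])
          fix s :: real assume "\<bar>s\<bar> < e"
          then have "f (a + s *\<^sub>R v) \<in> X" using inK assms(6) by blast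
          then show "poly q s = 0" using q P(3) pP by auto
        qed
        then show ?thesis using q by simp
      qed
      then show ?thesis using P(3) by blast
    qed
    have "f x $ i = f a $ i" for i
    proof -
      have "real_poly_fun (\<lambda>x. f x $ i)" using assms(3) unfolding polynomial_map_def by blast
      then obtain q where q: "\<forall>t. f (a + t *\<^sub>R v) $ i = poly q t" using rpf_line by blast
      have "\<bar>poly q t\<bar> \<le> B" for t
      proof -
        have "\<bar>poly q t\<bar> = \<bar>f (a + t *\<^sub>R v) $ i\<bar>" using q by simp
        also have "\<dots> \<le> norm (f (a + t *\<^sub>R v))" by (rule component_le_norm_cart)
        also have "\<dots> \<le> B" using B inX by blast
        finally show ?thesis .
      qed
      then have "poly q 1 = poly q 0" by (rule poly_bounded_const)
      then show ?thesis using q[rule_format, of 1] q[rule_format, of 0] by (simp add: v_def)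
    qed
    then show ?thesis by (simp add: vec_eq_iff)
  qed
  have "a \<in> K" using aK interior_subset by blast
  then have "f ` K = {f a}" using const by auto
  moreover have "f a \<in> X" using \<open>a \<in> K\<close> assms(6) by blast
  ultimately show ?thesis by blast
qed

end
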